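(* With the notation below, let $x\in X^{(\boldsymbol\alpha)}$. Then there is a bijection between $H_1\cdot[x]_{H_2}$ (a subset of the orbit set $H_2\backslash X^{(\boldsymbol\alpha)}$ for the action $\varGamma_2$) and $F^{(\boldsymbol\alpha)}\mathbb Z^N\backslash\mathbb Z^N$ that commutes with the action of $H_1$. Here $H_1$ acts on $H_2\backslash X^{(\boldsymbol\alpha)}$ by $f\cdot[z]_{H_2}=[\varGamma_1(f,z)]_{H_2}$ and on $F^{(\boldsymbol\alpha)}\mathbb Z^N\backslash\mathbb Z^N$ by $f\cdot[\boldsymbol\omega]=[\boldsymbol\omega+\psi(f)]$.
   Context: Fix $N\ge1$, integers $m_j\ge1$, $p_j\ge0$ ($1\le j\le N$), and an integer matrix $(B_{j,k})$. For $m\ge1,p\ge0$ let $\Lambda(m,p)=\{(\lambda_i)_{i\in\mathbb Z}: \lambda_i\in\mathbb Z,\ \lambda_1=0,\ \lambda_i\le\lambda_{i+1},\ \lambda_{i+m}=\lambda_i+p\ \forall i\}$, and for a positive common divisor $\alpha$ of $m,p$ (every positive integer divides $0$) let $\Lambda^{(\alpha)}(m,p)=\{\lambda\in\Lambda(m/\alpha,p/\alpha):\lambda\notin\Lambda(m/\alpha',p/\alpha')$ for every common divisor $\alpha'>\alpha\}$. Let $X_1=\mathbb Z^N$ (column vectors), $X_2=\prod_{j}\Lambda(m_j,p_j)$, elements $\boldsymbol\lambda=(\lambda^{(j)}_i)$. $H_2$ is the free abelian group on $s_1,\dots,s_N$; for $g=\sum_kn_ks_k$: $\Upsilon(g,\boldsymbol\lambda)=(\lambda^{(j)}_{n_j+i}-\lambda^{(j)}_{n_j+1})_{i,j}$,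 $\varphi(g,\boldsymbol\omega,\boldsymbol\lambda)=\boldsymbol\omega+(\lambda^{(j)}_{n_j+1}+\sum_kB_{j,k}n_k)_j$, $\varGamma_2(g,(\boldsymbol\omega,\boldsymbol\lambda))=(\varphi(g,\boldsymbol\omega,\boldsymbol\lambda),\Upsilon(g,\boldsymbol\lambda))$. $H_1$ is an abelian group with a surjective group homomorphism $\psi:H_1\to\mathbb Z^N$, acting by $\varGamma_1(f,(\boldsymbol\omega,\boldsymbol\lambda))=(\boldsymbol\omega+\psi(f),\boldsymbol\lambda)$. Fix $\boldsymbol\alpha=(\alpha_j)$ with $\alpha_j$ a positive common divisor of $m_j,p_j$; $X^{(\boldsymbol\alpha)}=X_1\times\prod_j\Lambda^{(\alpha_j)}(m_j,p_j)$ (invariant under $\varGamma_1,\varGamma_2$); $F^{(\boldsymbol\alpha)}_{j,k}=(\delta_{j,k}p_k+B_{j,k}m_k)/\alpha_k$. $F^{(\boldsymbol\alpha)}\mathbb Z^N\backslash\mathbb Z^N$ is the set of cosets of the subgroup $F^{(\boldsymbol\alpha)}\mathbb Z^N\subset\mathbb Z^N$. *)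

theory Defs
  imports Main "HOL-Library.Function_Algebras"
begin

text \<open>Index set {1..N} is modelled by a finite type 'n; vectors in Z^N are functions 'n => int.
  Sequences (lambda_i)_{i in Z} are functions int => int.\<close>

definition Lam :: "int \<Rightarrow> int \<Rightarrow> (int \<Rightarrow> int) set" where
  "Lam m p = {lam. lam 1 = 0 \<and> (\<forall>i. lam i \<le> lam (i + 1)) \<and> (\<forall>i. lam (i + m) = lam i + p)}"

definition Lam_alpha :: "int \<Rightarrow> int \<Rightarrow> int \<Rightarrow> (int \<Rightarrow> int) set" where
  "Lam_alpha a m p = {lam. lam \<in> Lam (m div a) (p div a) \<and>
     (\<forall>a'. a' > a \<and> a' dvd m \<and> a' dvd p \<longrightarrow> lam \<notin> Lam (m div a') (p div a'))}"

definition X_alpha :: "('n \<Rightarrow> int) \<Rightarrow> ('n \<Rightarrow> int) \<Rightarrow> ('n \<Rightarrow> int)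
    \<Rightarrow> (('n \<Rightarrow> int) \<times> ('n \<Rightarrow> int \<Rightarrow> int)) set" where
  "X_alpha a m p = {(\<omega>, lam). \<forall>j. lam j \<in> Lam_alpha (a j) (m j) (p j)}"

text \<open>Action of H_2 (free abelian group on s_1..s_N, element g = sum_k n_k s_k given by n).\<close>
definition Gamma2 :: "('n::finite \<Rightarrow> 'n \<Rightarrow> int) \<Rightarrow> ('n \<Rightarrow> int)
    \<Rightarrow> ('n \<Rightarrow> int) \<times> ('n \<Rightarrow> int \<Rightarrow> int) \<Rightarrow> ('n \<Rightarrow> int) \<times> ('n \<Rightarrow> int \<Rightarrow> int)" where
  "Gamma2 B n x = (case x of (\<omega>, lam) \<Rightarrow>
     (\<lambda>j. \<omega> j + lam j (n j + 1) + (\<Sum>k\<in>UNIV. B j k * n k),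
      \<lambda>j i. lam j (n j + i) - lam j (n j + 1)))"

definition Gamma1 :: "('h \<Rightarrow> ('n \<Rightarrow> int)) \<Rightarrow> 'h
    \<Rightarrow> ('n \<Rightarrow> int) \<times> ('n \<Rightarrow> int \<Rightarrow> int) \<Rightarrow> ('n \<Rightarrow> int) \<times> ('n \<Rightarrow> int \<Rightarrow> int)" where
  "Gamma1 \<psi> f x = (case x of (\<omega>, lam) \<Rightarrow> (\<omega> + \<psi> f, lam))"

definition orbit2 :: "('n::finite \<Rightarrow> 'n \<Rightarrow> int) \<Rightarrow> ('n \<Rightarrow> int) \<times> ('n \<Rightarrow> int \<Rightarrow> int)
    \<Rightarrow> (('n \<Rightarrow> int) \<times> ('n \<Rightarrow> int \<Rightarrow> int)) set" where
  "orbit2 B x = {Gamma2 B n x | n. True}"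

definition Fmat :: "('n \<Rightarrow> 'n \<Rightarrow> int) \<Rightarrow> ('n \<Rightarrow> int) \<Rightarrow> ('n \<Rightarrow> int) \<Rightarrow> ('n \<Rightarrow> int)
    \<Rightarrow> 'n \<Rightarrow> 'n \<Rightarrow> int" where
  "Fmat B a m p j k = ((if j = k then p k else 0) + B j k * m k) div a k"

definition matvec :: "('n::finite \<Rightarrow> 'n \<Rightarrow> int) \<Rightarrow> ('n \<Rightarrow> int) \<Rightarrow> 'n \<Rightarrow> int" where
  "matvec F v = (\<lambda>j. \<Sum>k\<in>UNIV. F j k * v k)"

definition coset :: "('n::finite \<Rightarrow> 'n \<Rightarrow> int) \<Rightarrow> ('n \<Rightarrow> int) \<Rightarrow> ('n \<Rightarrow> int) set" where
  "coset F \<omega> = {\<omega> + matvec F v | v. True}"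

end

theory Submission imports Defs begin

definition goodp :: "(int \<Rightarrow> int) \<Rightarrow> int \<Rightarrow> bool" where
  "goodp l t \<longleftrightarrow> (\<forall>i. l (t+i) = l i + l (t+1))"

lemma good_neg:
  assumes "l 1 = 0" "goodp l t" shows "goodp l (-t) \<and> l (-t+1) = - l (t+1)"
proof -
  have h: "l i = l (-t+i) + l (t+1)" for i
  proof -
    have "l (t + (-t+i)) = l (-t+i) + l (t+1)" using assms(2) unfolding goodp_def by blast
    thus ?thesis by simp
  qed
  have e: "l (-t+1) = - l (t+1)" using h[of 1] assms(1) by simp
  have "l (-t+i) = l i + l (-t+1)" for i using h[of i] e by linarith
  thus ?thesis using e unfolding goodp_def by blast
qed

lemma good_add:
  assumes "goodp l t" "goodp l s" shows "goodp l (t+s) \<and> l (t+s+1) = l (t+1) + l (s+1)"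
proof -
  have a: "l (t+s+i) = l i + l (s+1) + l (t+1)" for i
  proof -
    have "l (t+(s+i)) = l (s+i) + l (t+1)" using assms(1) unfolding goodp_def by blast
    moreover have "l (s+i) = l i + l (s+1)" using assms(2) unfolding goodp_def by blast
    ultimately show ?thesis by (simp add: add.assoc)
  qed
  have b: "l (t+s+1) = l (t+1) + l (s+1)" using a[of 1] assms(2) unfolding goodp_def
    by (metis add.commute add.left_neutral a)
  show ?thesis unfolding goodp_def using a b by simp
qed

lemma good_zero: "l 1 = 0 \<Longrightarrow> goodp l 0"
  unfolding goodp_def by simp

lemma good_nat_mult:
  assumes "l 1 = 0" "goodp l t" shows "goodp l (int k * t) \<and> l (int k * t + 1) = int k * l (t+1)"
proof (induction k)
  case 0 then show ?case using assms good_zero by simp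
next
  case (Suc k)
  have e: "int (Suc k) * t = int k * t + t" by (simp add: distrib_right)
  have "goodp l (int k * t + t) \<and> l (int k * t + t + 1) = l (int k * t + 1) + l (t+1)"
    using good_add[OF conjunct1[OF Suc] assms(2)] .
  moreover have "int (Suc k) * l (t+1) = int k * l (t+1) + l (t+1)" by (simp add: distrib_right)
  ultimately show ?case using e Suc by simp
qed

lemma good_mult:
  assumes "l 1 = 0" "goodp l t" shows "goodp l (v * t) \<and> l (v * t + 1) = v * l (t+1)"
proof (cases "v \<ge> 0")
  case True
  then obtain k where "v = int k" using nonneg_int_cases by blast
  then show ?thesis using good_nat_mult[OF assms] by simp
next
  case False
  define k where "k = nat (-v)"
  have k: "v = - int k" using False k_def by simp
  have e: "v * t = - (int k * t)" using k by simp
  have g: "goodp l (int k * t) \<and> l (int k * t + 1) = int k * l (t+1)" using good_nat_mult[OF assms] .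
  show ?thesis using good_neg[OF assms(1) conjunct1[OF g]] g k e by simp
qed

lemma single:
  assumes l: "l \<in> Lam_alpha a m p" and a: "a > 0" "a dvd m" "a dvd p" and m: "m \<ge> 1"
    and g: "goodp l n"
  shows "\<exists>v. n = (m div a) * v \<and> l (n+1) = (p div a) * v"
proof -
  define q where "q = m div a"
  define P where "P = p div a"
  have mq: "m = a * q" using a q_def by simp
  have pP: "p = a * P" using a P_def by simp
  have "0 < a * q" using mq m by simp
  hence qpos: "q > 0" using a by (simp add: zero_less_mult_iff)
  have lam: "l \<in> Lam q P" using l unfolding Lam_alpha_def q_def P_def by simp
  hence l1: "l 1 = 0" and mono: "\<forall>i. l i \<le> l (i+1)" and per: "\<forall>i. l (i+q) = l i + P"
    unfolding Lam_def by auto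
  have lq: "l (q+1) = P" using per[rule_format, of 1] l1 by (simp add: add.commute)
  have gq: "goodp l q" unfolding goodp_def using per lq by (simp add: add.commute)
  define d where "d = gcd n q"
  have dpos: "d > 0" using qpos d_def by simp
  obtain u w where uw: "u * n + w * q = d" using bezout_int d_def by blast
  have gd: "goodp l d" using good_add[OF conjunct1[OF good_mult[OF l1 g, of u]] conjunct1[OF good_mult[OF l1 gq, of w]]] uw by simp
  have "d dvd q" unfolding d_def by simp
  then obtain k where qk: "q = d * k" by (rule dvdE)
  have kpos: "k > 0" using qk qpos dpos by (simp add: zero_less_mult_iff)
  define c where "c = l (d+1)"
  have "l (k * d + 1) = k * c" using good_mult[OF l1 gd, of k] c_def by simp
  hence Pk: "P = k * c" using qk lq by (simp add: mult.commute)
  have k1: "k = 1"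
  proof (rule ccontr)
    assume "k \<noteq> 1"
    hence "k > 1" using kpos by simp
    hence gt: "a * k > a" using a by simp
    have dm: "a * k dvd m" using mq qk by simp
    have dp: "a * k dvd p" using pP Pk by simp
    have md: "m div (a*k) = d" using mq qk a kpos by simp
    have pd: "p div (a*k) = c" using pP Pk a kpos by simp
    have "\<forall>i. l (i+d) = l i + c"
    proof
      fix i
      have "l (i+d) = l (d+i)" by (simp add: add.commute)
      also have "\<dots> = l i + l (d+1)" using gd unfolding goodp_def by blast
      finally show "l (i+d) = l i + c" using c_def by simp
    qed
    hence "l \<in> Lam d c" unfolding Lam_def using l1 mono by simp
    hence "l \<in> Lam (m div (a*k)) (p div (a*k))" using md pd by simp
    thus False using l gt dm dp unfolding Lam_alpha_def by blast
  qed
  have "d dvd n" unfolding d_def by simp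
  hence "q dvd n" using qk k1 by simp
  then obtain v0 where "n = q * v0" by (rule dvdE)
  hence nv: "n = v0 * q" by simp
  define v where "v = v0"
  have nv: "n = v * q" using nv v_def by simp
  have "l (n+1) = v * P" using good_mult[OF l1 gq, of v] nv lq by simp
  hence "n = (m div a) * v \<and> l (n+1) = (p div a) * v" using nv q_def P_def by (simp add: mult.commute)
  thus ?thesis by blast
qed


lemma lam_basic:
  assumes l: "l \<in> Lam_alpha a m p" and a: "a > 0" "a dvd m"
  shows "l 1 = 0 \<and> goodp l (m div a) \<and> l (m div a + 1) = p div a"
proof -
  have lam: "l \<in> Lam (m div a) (p div a)" using l unfolding Lam_alpha_def by simp
  hence l1: "l 1 = 0" and per: "\<forall>i. l (i + m div a) = l i + p div a"
    unfolding Lam_def by auto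
  have lq: "l (m div a + 1) = p div a" using per[rule_format, of 1] l1 by (simp add: add.commute)
  have gq: "goodp l (m div a)" unfolding goodp_def using per lq by (simp add: add.commute)
  show ?thesis using l1 lq gq by simp
qed

lemma gamma2_comp: "Gamma2 B n' (Gamma2 B n y) = Gamma2 B (n+n') y"
  by (cases y) (simp add: Gamma2_def fun_eq_iff algebra_simps sum.distrib)

lemma orbit2_gamma2: "orbit2 B (Gamma2 B n y) = orbit2 B y"
proof -
  have "\<exists>n'. Gamma2 B n'' y = Gamma2 B (n + n') y" for n''
    by (rule exI[of _ "n'' - n"]) simp
  thus ?thesis unfolding orbit2_def by (auto simp: gamma2_comp)
qed

lemma gamma1_gamma2: "Gamma1 \<psi> f (Gamma2 B n y) = Gamma2 B n (Gamma1 \<psi> f y)"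
  by (cases y) (simp add: Gamma1_def Gamma2_def fun_eq_iff)

lemma orbit_gamma1: "orbit2 B (Gamma1 \<psi> f z) = Gamma1 \<psi> f ` orbit2 B z"
  unfolding orbit2_def by (auto simp: gamma1_gamma2[symmetric])

lemma Fmat_eq:
  assumes "a k > 0" "a k dvd m k" "a k dvd p k"
  shows "Fmat B a m p j k = (if j = k then p k div a k else 0) + B j k * (m k div a k)"
  using assms unfolding Fmat_def
  by (cases "j = k") (simp_all add: div_plus_div_distrib_dvd_left div_mult_swap)

lemma matvec_eq:
  fixes a m p :: "'n::finite \<Rightarrow> int"
  assumes "\<forall>k. a k > 0 \<and> a k dvd m k \<and> a k dvd p k"
  shows "matvec (Fmat B a m p) v j = (p j div a j) * v j + (\<Sum>k\<in>UNIV. B j k * ((m k div a k) * v k))"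
proof -
  have "matvec (Fmat B a m p) v j = (\<Sum>k\<in>UNIV. (if j = k then p k div a k * v k else 0) + B j k * ((m k div a k) * v k))"
    unfolding matvec_def by (rule sum.cong[OF refl]) (use assms in \<open>auto simp: Fmat_eq algebra_simps\<close>)
  also have "\<dots> = (\<Sum>k\<in>UNIV. (if j = k then p k div a k * v k else 0)) + (\<Sum>k\<in>UNIV. B j k * ((m k div a k) * v k))"
    by (rule sum.distrib)
  also have "(\<Sum>k\<in>UNIV. (if j = k then p k div a k * v k else 0)) = p j div a j * v j"
    by simp
  finally show ?thesis .
qed

lemma matvec_add: "matvec F (v + w) = matvec F v + matvec F w"
  by (simp add: matvec_def fun_eq_iff algebra_simps sum.distrib)

lemma matvec_diff: "matvec F (v - w) = matvec F v - matvec F w"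
  by (simp add: matvec_def fun_eq_iff algebra_simps sum_subtractf)

lemma matvec_zero: "matvec F 0 = 0"
  by (simp add: matvec_def fun_eq_iff)

lemma coset_eq_iff: "coset F \<omega> = coset F \<omega>' \<longleftrightarrow> (\<exists>v. \<omega>' = \<omega> + matvec F v)"
proof
  assume e: "coset F \<omega> = coset F \<omega>'"
  have "\<omega>' \<in> coset F \<omega>'" unfolding coset_def
    by (rule CollectI, rule exI[of _ 0]) (simp add: matvec_zero)
  hence "\<omega>' \<in> coset F \<omega>" using e by simp
  thus "\<exists>v. \<omega>' = \<omega> + matvec F v" unfolding coset_def by auto
next
  assume "\<exists>v. \<omega>' = \<omega> + matvec F v"
  then obtain v where v: "\<omega>' = \<omega> + matvec F v" by blast
  show "coset F \<omega> = coset F \<omega>'"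
  proof
    show "coset F \<omega> \<subseteq> coset F \<omega>'"
    proof
      fix y assume "y \<in> coset F \<omega>"
      then obtain u where "y = \<omega> + matvec F u" unfolding coset_def by blast
      hence "y = \<omega>' + matvec F (u - v)" using v by (simp add: matvec_diff)
      thus "y \<in> coset F \<omega>'" unfolding coset_def by blast
    qed
    show "coset F \<omega>' \<subseteq> coset F \<omega>"
    proof
      fix y assume "y \<in> coset F \<omega>'"
      then obtain u where "y = \<omega>' + matvec F u" unfolding coset_def by blast
      hence "y = \<omega> + matvec F (v + u)" using v by (simp add: matvec_add add.assoc)
      thus "y \<in> coset F \<omega>" unfolding coset_def by blast
    qed
  qed
qed


lemma keyC:
  fixes a m p :: "'n::finite \<Rightarrow> int" and l :: "'n \<Rightarrow> int \<Rightarrow> int"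
  assumes m_pos: "\<forall>j. m j \<ge> 1"
    and a_pos: "\<forall>j. a j > 0 \<and> a j dvd m j \<and> a j dvd p j"
    and hl: "\<forall>j. l j \<in> Lam_alpha (a j) (m j) (p j)"
  shows "(\<exists>n. Gamma2 B n (\<omega>, l) = (\<omega>', l)) \<longleftrightarrow> (\<exists>v. \<omega>' = \<omega> + matvec (Fmat B a m p) v)"
proof
  assume "\<exists>n. Gamma2 B n (\<omega>, l) = (\<omega>', l)"
  then obtain n where en: "Gamma2 B n (\<omega>, l) = (\<omega>', l)" by blast
  have c1: "\<omega>' j = \<omega> j + l j (n j + 1) + (\<Sum>k\<in>UNIV. B j k * n k)" for j
    using en unfolding Gamma2_def by (simp add: fun_eq_iff)
  have c2: "l j (n j + i) - l j (n j + 1) = l j i" for j i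
    using en unfolding Gamma2_def by (simp add: fun_eq_iff)
  have "goodp (l j) (n j)" for j unfolding goodp_def using c2 by (metis add_diff_cancel diff_add_cancel add.commute)
  hence "\<forall>j. \<exists>v. n j = (m j div a j) * v \<and> l j (n j + 1) = (p j div a j) * v"
    using single hl a_pos m_pos by blast
  hence "\<exists>v. \<forall>j. n j = (m j div a j) * v j \<and> l j (n j + 1) = (p j div a j) * v j"
    by (rule choice)
  then obtain v where v: "\<And>j. n j = (m j div a j) * v j \<and> l j (n j + 1) = (p j div a j) * v j" by blast
  have "\<omega>' j = (\<omega> + matvec (Fmat B a m p) v) j" for j
  proof -
    have e1: "l j (n j + 1) = (p j div a j) * v j" using v by blast
    have e2: "(\<Sum>k\<in>UNIV. B j k * n k) = (\<Sum>k\<in>UNIV. B j k * ((m k div a k) * v k))"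
      using v by simp
    have e3: "(\<omega> + matvec (Fmat B a m p) v) j = \<omega> j + matvec (Fmat B a m p) v j" by simp
    show ?thesis using c1[of j] e1 e2 e3 matvec_eq[OF a_pos, of B v j] by linarith
  qed
  thus "\<exists>v. \<omega>' = \<omega> + matvec (Fmat B a m p) v" by (auto simp: fun_eq_iff)
next
  assume "\<exists>v. \<omega>' = \<omega> + matvec (Fmat B a m p) v"
  then obtain v where v: "\<omega>' = \<omega> + matvec (Fmat B a m p) v" by blast
  define n where "n = (\<lambda>j. (m j div a j) * v j)"
  have props: "goodp (l j) (n j) \<and> l j (n j + 1) = (p j div a j) * v j" for j
  proof -
    have b: "l j 1 = 0 \<and> goodp (l j) (m j div a j) \<and> l j (m j div a j + 1) = p j div a j"
      using lam_basic hl a_pos by blast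
    have "goodp (l j) (v j * (m j div a j)) \<and> l j (v j * (m j div a j) + 1) = v j * l j (m j div a j + 1)"
      using good_mult b by blast
    thus ?thesis using b n_def by (simp add: mult.commute)
  qed
  have "Gamma2 B n (\<omega>, l) = (\<omega>', l)"
  proof -
    have "l j (n j + i) - l j (n j + 1) = l j i" for j i
    proof -
      have "l j (n j + i) = l j i + l j (n j + 1)" using props[of j] unfolding goodp_def by blast
      thus ?thesis by linarith
    qed
    moreover have "\<omega> j + l j (n j + 1) + (\<Sum>k\<in>UNIV. B j k * n k) = \<omega>' j" for j
    proof -
      have e1: "l j (n j + 1) = (p j div a j) * v j" using props[of j] by blast
      have e2: "(\<Sum>k\<in>UNIV. B j k * n k) = (\<Sum>k\<in>UNIV. B j k * ((m k div a k) * v k))"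
        unfolding n_def by simp
      have e3: "\<omega>' j = \<omega> j + matvec (Fmat B a m p) v j" using v by simp
      show ?thesis using e1 e2 e3 matvec_eq[OF a_pos, of B v j] by linarith
    qed
    ultimately show ?thesis unfolding Gamma2_def by (simp add: fun_eq_iff)
  qed
  thus "\<exists>n. Gamma2 B n (\<omega>, l) = (\<omega>', l)" by blast
qed


theorem mainTheorem7:
  fixes m p a :: "'n::finite \<Rightarrow> int"
    and B :: "'n \<Rightarrow> 'n \<Rightarrow> int"
    and \<psi> :: "'h::ab_group_add \<Rightarrow> ('n \<Rightarrow> int)"
    and x :: "('n \<Rightarrow> int) \<times> ('n \<Rightarrow> int \<Rightarrow> int)"
  assumes m_pos: "\<forall>j. m j \<ge> 1"
    and p_nonneg: "\<forall>j. p j \<ge> 0"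
    and a_pos: "\<forall>j. a j > 0 \<and> a j dvd m j \<and> a j dvd p j"
    and psi_hom: "\<forall>f g. \<psi> (f + g) = \<psi> f + \<psi> g"
    and psi_surj: "surj \<psi>"
    and x_in: "x \<in> X_alpha a m p"
  shows "\<exists>\<Phi>. bij_betw \<Phi> {orbit2 B (Gamma1 \<psi> f x) | f. True}
                        (range (coset (Fmat B a m p)))
          \<and> (\<forall>f z \<omega>. orbit2 B z \<in> {orbit2 B (Gamma1 \<psi> f x) | f. True}
                  \<longrightarrow> \<Phi> (orbit2 B z) = coset (Fmat B a m p) \<omega>
                  \<longrightarrow> \<Phi> (orbit2 B (Gamma1 \<psi> f z)) = coset (Fmat B a m p) (\<omega> + \<psi> f))"
proof -
  define F where "F = Fmat B a m p"
  obtain \<omega>0 l where x: "x = (\<omega>0, l)" by (cases x)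
  have hl: "\<forall>j. l j \<in> Lam_alpha (a j) (m j) (p j)" using x_in x unfolding X_alpha_def by simp
  have l1: "l j 1 = 0" for j using lam_basic hl a_pos by blast
  have G1: "Gamma1 \<psi> f x = (\<omega>0 + \<psi> f, l)" for f using x by (simp add: Gamma1_def)
  have self: "(\<omega>, l) \<in> orbit2 B (\<omega>, l)" for \<omega>
  proof -
    have "Gamma2 B 0 (\<omega>, l) = (\<omega>, l)" unfolding Gamma2_def using l1 by (simp add: fun_eq_iff)
    thus ?thesis unfolding orbit2_def by (metis (mono_tags, lifting) mem_Collect_eq)
  qed
  have key: "orbit2 B (\<omega>, l) = orbit2 B (\<omega>', l) \<longleftrightarrow> coset F \<omega> = coset F \<omega>'" for \<omega> \<omega>'
  proof
    assume "orbit2 B (\<omega>, l) = orbit2 B (\<omega>', l)"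
    hence "(\<omega>', l) \<in> orbit2 B (\<omega>, l)" using self by simp
    hence "\<exists>n. Gamma2 B n (\<omega>, l) = (\<omega>', l)" unfolding orbit2_def by auto
    thus "coset F \<omega> = coset F \<omega>'" using keyC[OF m_pos a_pos hl] coset_eq_iff F_def by metis
  next
    assume "coset F \<omega> = coset F \<omega>'"
    hence "\<exists>n. Gamma2 B n (\<omega>, l) = (\<omega>', l)" using keyC[OF m_pos a_pos hl] coset_eq_iff F_def by metis
    then obtain n where "Gamma2 B n (\<omega>, l) = (\<omega>', l)" by blast
    thus "orbit2 B (\<omega>, l) = orbit2 B (\<omega>', l)" using orbit2_gamma2 by metis
  qed
  define S where "S = {orbit2 B (Gamma1 \<psi> f x) | f. True}"
  define \<Phi> where "\<Phi> = (\<lambda>Ob. SOME C. \<exists>f. Ob = orbit2 B (Gamma1 \<psi> f x) \<and> C = coset F (\<omega>0 + \<psi> f))"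
  have Phival: "\<Phi> (orbit2 B (Gamma1 \<psi> f x)) = coset F (\<omega>0 + \<psi> f)" for f
  proof -
    have "\<exists>C. \<exists>g. orbit2 B (Gamma1 \<psi> f x) = orbit2 B (Gamma1 \<psi> g x) \<and> C = coset F (\<omega>0 + \<psi> g)"
      by blast
    from someI_ex[OF this] obtain g where
      g: "orbit2 B (Gamma1 \<psi> f x) = orbit2 B (Gamma1 \<psi> g x)"
      and c: "\<Phi> (orbit2 B (Gamma1 \<psi> f x)) = coset F (\<omega>0 + \<psi> g)"
      unfolding \<Phi>_def by blast
    have "coset F (\<omega>0 + \<psi> f) = coset F (\<omega>0 + \<psi> g)" using g key G1 by simp
    thus ?thesis using c by simp
  qed
  have bij: "bij_betw \<Phi> S (range (coset F))"
  proof (rule bij_betwI')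
    fix Q1 Q2 assume "Q1 \<in> S" "Q2 \<in> S"
    then obtain f1 f2 where o1: "Q1 = orbit2 B (Gamma1 \<psi> f1 x)" and o2: "Q2 = orbit2 B (Gamma1 \<psi> f2 x)"
      unfolding S_def by blast
    show "(\<Phi> Q1 = \<Phi> Q2) = (Q1 = Q2)" using o1 o2 Phival key G1 by metis
  next
    fix Q1 assume "Q1 \<in> S"
    then obtain f1 where o1: "Q1 = orbit2 B (Gamma1 \<psi> f1 x)" unfolding S_def by blast
    show "\<Phi> Q1 \<in> range (coset F)" using o1 Phival by simp
  next
    fix C assume "C \<in> range (coset F)"
    then obtain \<omega> where C: "C = coset F \<omega>" by blast
    obtain f where f: "\<psi> f = \<omega> - \<omega>0" using psi_surj by (metis surjD)
    have "\<Phi> (orbit2 B (Gamma1 \<psi> f x)) = C" using Phival f C by simp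
    moreover have "orbit2 B (Gamma1 \<psi> f x) \<in> S" unfolding S_def by blast
    ultimately show "\<exists>Ob\<in>S. C = \<Phi> Ob" by metis
  qed
  have G11: "Gamma1 \<psi> f (Gamma1 \<psi> g x) = Gamma1 \<psi> (g + f) x" for f g
    using psi_hom x by (simp add: Gamma1_def add.assoc)
  have comm: "\<Phi> (orbit2 B (Gamma1 \<psi> f z)) = coset F (\<omega> + \<psi> f)"
    if h1: "orbit2 B z \<in> S" and h2: "\<Phi> (orbit2 B z) = coset F \<omega>" for f z \<omega>
  proof -
    obtain g where g: "orbit2 B z = orbit2 B (Gamma1 \<psi> g x)" using h1 unfolding S_def by blast
    have cg: "coset F (\<omega>0 + \<psi> g) = coset F \<omega>" using h2 g Phival by simp
    then obtain v where v: "\<omega> = \<omega>0 + \<psi> g + matvec F v" using coset_eq_iff by metis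
    have "orbit2 B (Gamma1 \<psi> f z) = orbit2 B (Gamma1 \<psi> (g + f) x)"
      using g orbit_gamma1 G11 by metis
    hence "\<Phi> (orbit2 B (Gamma1 \<psi> f z)) = coset F (\<omega>0 + \<psi> g + \<psi> f)"
      using Phival psi_hom by (simp add: add.assoc)
    also have "\<dots> = coset F (\<omega> + \<psi> f)"
      using coset_eq_iff[of F "\<omega>0 + \<psi> g + \<psi> f" "\<omega> + \<psi> f"] v by (metis add.assoc add.commute)
    finally show ?thesis .
  qed
  show ?thesis
    apply (rule exI[of _ \<Phi>])
    using bij comm unfolding S_def F_def by blast
qed

end
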